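(* Let $(V,\{A,B\})$ be a forking problem in which every agent's preference is non-interleaving. Then the profile admits exactly one stable assignment.
   Context: Agents $V=\{v_1,\dots,v_n\}$; two alternatives $A,B$. Each agent $v_i$ has a strict total order $\succ_i$ on $\{A,B\}\times\{1,\dots,n\}$, where $(S,j)$ means being in the community adopting $S$ of size $j$; it is monotonic if $(S,j)\succ_i(S,k)$ whenever $k<j$. A preference is non-interleaving if it is monotonic and either $(A,1)\succ_i(B,n)$ or $(B,1)\succ_i(A,n)$. An assignment is a map $f:V\to\{A,B\}$; $v_i$ prefers $f$ to $g$ if $(f(v_i),|f^{-1}(f(v_i))|)\succ_i(g(v_i),|g^{-1}(g(v_i))|)$. An assignment $f$ is stable if there is no assignment $f'\neq f$ such that every agent $v_i$ with $f'(v_i)\neq f(v_i)$ prefers $f'$ to $f$. *)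

theory Defs
  imports "HOL-Library.FuncSet"
begin

datatype alt = A | B

text \<open>A forking problem: a finite set of agents V (n = card V), two alternatives A, B,
and for each agent v a strict relation P v on alt \<times> nat; P v x y means x \<succ>_v y.
Only its restriction to alt \<times> {1..n} matters.\<close>

definition strict_total_order_on :: "'a set \<Rightarrow> ('a \<Rightarrow> 'a \<Rightarrow> bool) \<Rightarrow> bool" where
  "strict_total_order_on X R \<longleftrightarrow>
     (\<forall>x\<in>X. \<not> R x x) \<and>
     (\<forall>x\<in>X. \<forall>y\<in>X. \<forall>z\<in>X. R x y \<longrightarrow> R y z \<longrightarrow> R x z) \<and>
     (\<forall>x\<in>X. \<forall>y\<in>X. x \<noteq> y \<longrightarrow> R x y \<or> R y x)"

definition outcomes :: "nat \<Rightarrow> (alt \<times> nat) set" where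
  "outcomes n = UNIV \<times> {1..n}"

definition forking_problem :: "'v set \<Rightarrow> ('v \<Rightarrow> alt \<times> nat \<Rightarrow> alt \<times> nat \<Rightarrow> bool) \<Rightarrow> bool" where
  "forking_problem V P \<longleftrightarrow> finite V \<and>
     (\<forall>v\<in>V. strict_total_order_on (outcomes (card V)) (P v))"

definition monotonic_pref :: "nat \<Rightarrow> (alt \<times> nat \<Rightarrow> alt \<times> nat \<Rightarrow> bool) \<Rightarrow> bool" where
  "monotonic_pref n R \<longleftrightarrow> (\<forall>S j k. 1 \<le> k \<and> k < j \<and> j \<le> n \<longrightarrow> R (S, j) (S, k))"

definition non_interleaving :: "nat \<Rightarrow> (alt \<times> nat \<Rightarrow> alt \<times> nat \<Rightarrow> bool) \<Rightarrow> bool" where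
  "non_interleaving n R \<longleftrightarrow> monotonic_pref n R \<and> (R (A, 1) (B, n) \<or> R (B, 1) (A, n))"

text \<open>Assignments are functions V \<rightarrow> {A,B}, represented extensionally (undefined outside V).\<close>

definition assignments :: "'v set \<Rightarrow> ('v \<Rightarrow> alt) set" where
  "assignments V = V \<rightarrow>\<^sub>E (UNIV :: alt set)"

definition community_size :: "'v set \<Rightarrow> ('v \<Rightarrow> alt) \<Rightarrow> 'v \<Rightarrow> nat" where
  "community_size V f v = card {w \<in> V. f w = f v}"

definition prefers :: "'v set \<Rightarrow> ('v \<Rightarrow> alt \<times> nat \<Rightarrow> alt \<times> nat \<Rightarrow> bool) \<Rightarrow> 'v \<Rightarrow> ('v \<Rightarrow> alt) \<Rightarrow> ('v \<Rightarrow> alt) \<Rightarrow> bool" where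
  "prefers V P v f g \<longleftrightarrow> P v (f v, community_size V f v) (g v, community_size V g v)"

definition stable :: "'v set \<Rightarrow> ('v \<Rightarrow> alt \<times> nat \<Rightarrow> alt \<times> nat \<Rightarrow> bool) \<Rightarrow> ('v \<Rightarrow> alt) \<Rightarrow> bool" where
  "stable V P f \<longleftrightarrow> f \<in> assignments V \<and>
     \<not> (\<exists>f' \<in> assignments V. f' \<noteq> f \<and> (\<forall>v\<in>V. f' v \<noteq> f v \<longrightarrow> prefers V P v f' f))"

end

theory Submission
  imports Defs
begin

fun opp :: "alt \<Rightarrow> alt" where "opp A = B" | "opp B = A"

lemma ne_opp: "(x::alt) \<noteq> y \<Longrightarrow> x = opp y"
  by (cases x; cases y) auto

lemma opp_ne: "opp x \<noteq> x" by (cases x) auto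

lemma chain:
  assumes sto: "strict_total_order_on (outcomes n) R" and mono: "monotonic_pref n R"
    and h: "R (S,1) (T,n)" and j: "j \<in> {1..n}" and k: "k \<in> {1..n}"
  shows "R (S,j) (T,k)"
proof -
  have tr: "\<And>x y z. x \<in> outcomes n \<Longrightarrow> y \<in> outcomes n \<Longrightarrow> z \<in> outcomes n \<Longrightarrow> R x y \<Longrightarrow> R y z \<Longrightarrow> R x z"
    using sto unfolding strict_total_order_on_def by blast
  have o: "(S,1) \<in> outcomes n" "(T,n) \<in> outcomes n" "(S,j) \<in> outcomes n" "(T,k) \<in> outcomes n"
    using j k by (auto simp: outcomes_def)
  have a: "R (S,j) (T,n)"
  proof (cases "j = 1")
    case False
    then have "R (S,j) (S,1)" using mono j unfolding monotonic_pref_def by auto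
    then show ?thesis using tr o h by blast
  qed (use h in simp)
  show ?thesis
  proof (cases "k = n")
    case False
    then have "R (T,n) (T,k)" using mono k unfolding monotonic_pref_def by auto
    then show ?thesis using tr o a by blast
  qed (use a in simp)
qed

lemma asym:
  assumes sto: "strict_total_order_on X R" and "x \<in> X" "y \<in> X" "R x y"
  shows "\<not> R y x"
  using assms unfolding strict_total_order_on_def by blast

theorem mainTheorem2:
  fixes V :: "'v set" and P :: "'v \<Rightarrow> alt \<times> nat \<Rightarrow> alt \<times> nat \<Rightarrow> bool"
  assumes "forking_problem V P"
    and "\<forall>v\<in>V. non_interleaving (card V) (P v)"
  shows "\<exists>!f. stable V P f"
proof -
  let ?n = "card V"
  have fin: "finite V" and sto: "\<And>v. v \<in> V \<Longrightarrow> strict_total_order_on (outcomes ?n) (P v)"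
    using assms(1) unfolding forking_problem_def by auto
  define fav where "fav v = (if P v (A,1) (B,?n) then A else B)" for v
  have best: "P v (fav v, j) (opp (fav v), k)" if v: "v \<in> V" and j: "j \<in> {1..?n}" and k: "k \<in> {1..?n}" for v j k
  proof -
    have ni: "monotonic_pref ?n (P v)" "P v (A,1) (B,?n) \<or> P v (B,1) (A,?n)"
      using assms(2) v unfolding non_interleaving_def by auto
    show ?thesis
    proof (cases "P v (A,1) (B,?n)")
      case True
      then show ?thesis using chain[OF sto[OF v] ni(1) True j k] by (simp add: fav_def)
    next
      case False
      then have "P v (B,1) (A,?n)" using ni(2) by simp
      then show ?thesis using chain[OF sto[OF v] ni(1) _ j k] False by (simp add: fav_def)
    qed
  qed
  have cs: "community_size V g v \<in> {1..?n}" if "v \<in> V" for g v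
  proof -
    have "{w \<in> V. g w = g v} \<subseteq> V" by auto
    then have "card {w \<in> V. g w = g v} \<le> ?n" using fin card_mono by blast
    moreover have "card {w \<in> V. g w = g v} \<ge> 1"
      using that fin card_gt_0_iff[of "{w \<in> V. g w = g v}"] by auto
    ultimately show ?thesis unfolding community_size_def by auto
  qed
  have pref_fav: "prefers V P v g h" if "v \<in> V" "g v = fav v" "h v \<noteq> fav v" for v g h
  proof -
    have "h v = opp (fav v)" using that ne_opp by blast
    then show ?thesis unfolding prefers_def using best[OF that(1) cs[OF that(1)] cs[OF that(1)]] that(2) by simp
  qed
  have not_pref: "\<not> prefers V P v g h" if "v \<in> V" "h v = fav v" "g v \<noteq> fav v" for v g h
  proof -
    have "prefers V P v h g" using pref_fav that by blast
    moreover have "(g v, community_size V g v) \<in> outcomes ?n" "(h v, community_size V h v) \<in> outcomes ?n"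
      using cs that(1) by (auto simp: outcomes_def)
    ultimately show ?thesis using asym[OF sto[OF that(1)]] unfolding prefers_def by blast
  qed
  define f where "f v = (if v \<in> V then fav v else undefined)" for v
  have fa: "f \<in> assignments V" unfolding assignments_def f_def by auto
  have fst: "stable V P f"
    unfolding stable_def
  proof (intro conjI fa notI)
    assume "\<exists>f'\<in>assignments V. f' \<noteq> f \<and> (\<forall>v\<in>V. f' v \<noteq> f v \<longrightarrow> prefers V P v f' f)"
    then obtain f' where f': "f' \<in> assignments V" "f' \<noteq> f" "\<forall>v\<in>V. f' v \<noteq> f v \<longrightarrow> prefers V P v f' f" by blast
    have "\<exists>v. f' v \<noteq> f v" using f'(2) by (simp add: fun_eq_iff)
    then obtain v where v: "f' v \<noteq> f v" by (elim exE)
    have "v \<in> V"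
    proof (rule ccontr)
      assume nv: "v \<notin> V"
      have "f' v = undefined" using f'(1) nv unfolding assignments_def by (rule PiE_arb)
      moreover have "f v = undefined" using nv by (simp add: f_def)
      ultimately show False using v by simp
    qed
    then have "f v = fav v" by (simp add: f_def)
    then show False using f'(3) v not_pref[of v f f'] not_pref[of v f' f] \<open>v \<in> V\<close> by metis
  qed
  show ?thesis
  proof (rule ex1I[of _ f])
    fix g assume g: "stable V P g"
    then have ga: "g \<in> assignments V" unfolding stable_def by auto
    show "g = f"
    proof (rule ccontr)
      assume "g \<noteq> f"
      then have ne: "f \<noteq> g" by simp
      have "\<forall>v\<in>V. f v \<noteq> g v \<longrightarrow> prefers V P v f g"
        using pref_fav by (simp add: f_def)
      then have "\<exists>f'\<in>assignments V. f' \<noteq> g \<and> (\<forall>v\<in>V. f' v \<noteq> g v \<longrightarrow> prefers V P v f' g)"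
        using fa ne by blast
      then show False using g unfolding stable_def by blast
    qed
  qed (rule fst)
qed

end
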